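(* The closure (in the sup norm) of the convex hull of $\{h_A: A\subseteq[0,\pi]\text{ Lebesgue measurable}\}$ coincides with $\mathbf{E}(\mathbb{S}^1)$.
   Context: $\mathbb{S}^1=\mathbb{R}/2\pi$ with its geodesic metric. For a metric space $X$, $\Delta(X)=\{f:X\to\mathbb{R}\text{ bounded}:f(x)+f(x')\ge d_X(x,x')\}$ and the tight span $\mathbf{E}(X)$ is the set of pointwise-minimal elements of $\Delta(X)$ with the sup-norm metric. For $\theta\in\mathbb{R}$, $g_\theta:\mathbb{S}^1\to\mathbb{R}$ is $g_\theta(\varphi)=\frac12$ if $\varphi\in[\theta,\theta+\pi)$ (mod $2\pi$) and $-\frac12$ otherwise. For a Lebesgue measurable $A\subseteq[0,\pi]$, $h_A:\mathbb{S}^1\to\mathbb{R}$ is $h_A(\varphi)=\frac{\pi}{2}+\int_0^\pi g_\theta(\varphi)\big(1_A(\theta)-1_{[0,\pi]\setminus A}(\theta)\big)\,d\theta$. *)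

theory Defs
  imports "HOL-Analysis.Analysis"
begin

text \<open>The circle S^1 = R/2pi.  Points of S^1 are represented by real numbers,
 functions on S^1 by 2pi-periodic functions real => real.\<close>

definition circ_red :: "real \<Rightarrow> real" where
  "circ_red x = x - 2*pi * of_int \<lfloor>x / (2*pi)\<rfloor>"

definition circ_dist :: "real \<Rightarrow> real \<Rightarrow> real" where
  "circ_dist x y = min (circ_red (x - y)) (2*pi - circ_red (x - y))"

definition circ_fun :: "(real \<Rightarrow> real) \<Rightarrow> bool" where
  "circ_fun f \<longleftrightarrow> (\<forall>x. f (x + 2*pi) = f x)"

definition Delta_S1 :: "(real \<Rightarrow> real) set" where
  "Delta_S1 = {f. circ_fun f \<and> bounded (range f) \<and> (\<forall>x y. f x + f y \<ge> circ_dist x y)}"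

definition tight_span_S1 :: "(real \<Rightarrow> real) set" where
  "tight_span_S1 = {f \<in> Delta_S1. \<forall>g \<in> Delta_S1. (\<forall>x. g x \<le> f x) \<longrightarrow> g = f}"

definition g_theta :: "real \<Rightarrow> real \<Rightarrow> real" where
  "g_theta \<theta> \<phi> = (if circ_red (\<phi> - \<theta>) < pi then 1/2 else -1/2)"

definition h_set :: "real set \<Rightarrow> real \<Rightarrow> real" where
  "h_set A \<phi> = pi/2 + (LINT \<theta>:{0..pi}|lebesgue.
       g_theta \<theta> \<phi> * (indicator A \<theta> - indicator ({0..pi} - A) \<theta>))"

definition conv_hull_fun :: "(real \<Rightarrow> real) set \<Rightarrow> (real \<Rightarrow> real) set" where
  "conv_hull_fun S = {(\<lambda>x. \<Sum>i<n. c i * f i x) | (n::nat) c f.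
      (\<forall>i<n. 0 \<le> c i \<and> f i \<in> S) \<and> (\<Sum>i<n. c i) = 1}"

definition sup_closure :: "(real \<Rightarrow> real) set \<Rightarrow> (real \<Rightarrow> real) set" where
  "sup_closure S = {g. \<forall>e>0. \<exists>f\<in>S. \<forall>x. \<bar>f x - g x\<bar> \<le> e}"

end

theory Submission
  imports Defs
begin


lemma circ_red_bounds: "0 \<le> circ_red x" "circ_red x < 2*pi"
proof -
  have p: "2*pi > 0" by simp
  define q where "q = real_of_int \<lfloor>x / (2*pi)\<rfloor>"
  have "q \<le> x/(2*pi)" "x/(2*pi) < q + 1" unfolding q_def by linarith+
  then have "2*pi*q \<le> 2*pi*(x/(2*pi))" "2*pi*(x/(2*pi)) < 2*pi*(q+1)"
    using p by (simp_all only: mult_le_cancel_left_pos mult_less_cancel_left_pos)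
  then have "2*pi * of_int \<lfloor>x / (2*pi)\<rfloor> \<le> x" "x < 2*pi * (of_int \<lfloor>x / (2*pi)\<rfloor> + 1)"
    unfolding q_def by simp_all
  then show "0 \<le> circ_red x" "circ_red x < 2*pi" unfolding circ_red_def by (simp_all add: algebra_simps)
qed

lemma circ_red_eq: "\<exists>n::int. circ_red x = x - 2*pi*n"
  unfolding circ_red_def by blast

lemma circ_red_shift: "circ_red (x + 2*pi* of_int k) = circ_red x"
proof -
  have "(x + 2*pi* of_int k) / (2*pi) = x/(2*pi) + of_int k" by (simp add: field_simps)
  then have "\<lfloor>(x + 2*pi* of_int k) / (2*pi)\<rfloor> = \<lfloor>x/(2*pi)\<rfloor> + k" by simp
  then show ?thesis unfolding circ_red_def by (simp add: algebra_simps)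
qed

lemma circ_red_id: "0 \<le> x \<Longrightarrow> x < 2*pi \<Longrightarrow> circ_red x = x"
proof -
  assume a: "0 \<le> x" "x < 2*pi"
  have "\<lfloor>x/(2*pi)\<rfloor> = 0" using a by (simp add: floor_eq_iff field_simps)
  then show ?thesis unfolding circ_red_def by simp
qed

lemma circ_dist_le: "circ_dist x y \<le> \<bar>x - y - 2*pi* of_int k\<bar>"
proof -
  obtain n::int where n: "circ_red (x-y) = x - y - 2*pi*n" using circ_red_eq by blast
  define r where "r = x - y - 2*pi*n"
  define s where "s = x - y - 2*pi* of_int k"
  have b: "0 \<le> r" "r < 2*pi" using circ_red_bounds[of "x-y"] n unfolding r_def by auto
  have sr: "s = r + 2*pi*(of_int (n - k))" unfolding r_def s_def by (simp add: algebra_simps)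
  have m1: "min r (2*pi - r) \<le> r" and m2: "min r (2*pi - r) \<le> 2*pi - r" by auto
  consider "n - k \<ge> 1" | "n - k = 0" | "n - k \<le> -1" by linarith
  then have "min r (2*pi - r) \<le> \<bar>s\<bar>"
  proof cases
    case 1
    then have "real_of_int (n-k) \<ge> 1" by linarith
    then have "pi * 1 \<le> pi * of_int (n - k)" by (intro mult_left_mono) auto
    then have "2*pi*(of_int (n - k)) \<ge> 2*pi" by simp
    then have "s \<ge> r" using sr b by linarith
    then have "\<bar>s\<bar> \<ge> r" by (meson abs_ge_self order_trans)
    then show ?thesis using m1 by (rule order_trans[rotated])
  next
    case 2
    then have "s = r" using sr by simp
    then have "\<bar>s\<bar> = r" using b by simp
    then show ?thesis using m1 by simp
  next
    case 3
    then have "real_of_int (n-k) \<le> -1" by linarith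
    then have "pi * of_int (n - k) \<le> pi * (-1)" by (intro mult_left_mono) auto
    then have "2*pi*(of_int (n - k)) \<le> -2*pi" by simp
    then have "-s \<ge> 2*pi - r" using sr b by linarith
    then have "\<bar>s\<bar> \<ge> 2*pi - r" by (meson abs_ge_minus_self order_trans)
    then show ?thesis using m2 by (rule order_trans[rotated])
  qed
  then show ?thesis unfolding circ_dist_def n r_def s_def .
qed

lemma circ_dist_ex: "\<exists>k::int. circ_dist x y = \<bar>x - y - 2*pi* of_int k\<bar> \<and> circ_dist x y \<le> pi"
proof -
  obtain n::int where n: "circ_red (x-y) = x - y - 2*pi*n" using circ_red_eq by blast
  define r where "r = x - y - 2*pi*n"
  have b: "0 \<le> r" "r < 2*pi" using circ_red_bounds[of "x-y"] n unfolding r_def by auto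
  have cd: "circ_dist x y = min r (2*pi - r)" unfolding circ_dist_def n r_def ..
  show ?thesis
  proof (cases "r \<le> pi")
    case True
    then have "circ_dist x y = r" unfolding cd by simp
    moreover have "\<bar>x - y - 2*pi* of_int n\<bar> = r" using b unfolding r_def by simp
    ultimately show ?thesis using True by metis
  next
    case False
    then have "circ_dist x y = 2*pi - r" unfolding cd by simp
    moreover have "x - y - 2*pi* of_int (n+1) = -(2*pi - r)" unfolding r_def by (simp add: algebra_simps)
    moreover then have "\<bar>x - y - 2*pi* of_int (n+1)\<bar> = 2*pi - r" using b by simp
    ultimately have "circ_dist x y = \<bar>x - y - 2*pi* of_int (n+1)\<bar>" "circ_dist x y \<le> pi"
      using False by auto
    then show ?thesis by blast
  qed
qed

lemma circ_dist_nonneg: "circ_dist x y \<ge> 0"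
  using circ_dist_ex[of x y] by auto

lemma circ_dist_le_pi: "circ_dist x y \<le> pi"
  using circ_dist_ex[of x y] by auto

lemma circ_dist_refl: "circ_dist x x = 0"
  using circ_dist_le[of x x 0] circ_dist_nonneg[of x x] by simp

lemma circ_dist_sym: "circ_dist x y = circ_dist y x"
proof -
  have "circ_dist x y \<le> circ_dist y x" if "True" for x y
  proof -
    obtain k where k: "circ_dist y x = \<bar>y - x - 2*pi* of_int k\<bar>" using circ_dist_ex by blast
    have "circ_dist x y \<le> \<bar>x - y - 2*pi* of_int (-k)\<bar>" by (rule circ_dist_le)
    also have "\<dots> = \<bar>y - x - 2*pi* of_int k\<bar>" by simp
    finally show ?thesis using k by simp
  qed
  then show ?thesis by (meson order_antisym)
qed

lemma circ_dist_triangle: "circ_dist x z \<le> circ_dist x y + circ_dist y z"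
proof -
  obtain k where k: "circ_dist x y = \<bar>x - y - 2*pi* of_int k\<bar>" using circ_dist_ex by blast
  obtain l where l: "circ_dist y z = \<bar>y - z - 2*pi* of_int l\<bar>" using circ_dist_ex by blast
  have "circ_dist x z \<le> \<bar>x - z - 2*pi* of_int (k+l)\<bar>" by (rule circ_dist_le)
  also have "\<dots> = \<bar>(x - y - 2*pi* of_int k) + (y - z - 2*pi* of_int l)\<bar>"
    by (simp add: algebra_simps)
  also have "\<dots> \<le> \<bar>x - y - 2*pi* of_int k\<bar> + \<bar>y - z - 2*pi* of_int l\<bar>"
    by (rule abs_triangle_ineq)
  finally show ?thesis using k l by simp
qed

lemma circ_dist_antipode: "circ_dist x (x + pi) = pi"
proof -
  obtain k where k: "circ_dist x (x+pi) = \<bar>x - (x+pi) - 2*pi* of_int k\<bar>" using circ_dist_ex by blast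
  have "x - (x+pi) - 2*pi * of_int k = -(pi * (1 + 2 * of_int k))" by (simp add: algebra_simps)
  then have "\<bar>x - (x+pi) - 2*pi * of_int k\<bar> = pi * \<bar>1 + 2 * of_int k\<bar>" by (simp only: abs_minus_cancel abs_mult) simp
  moreover have "\<bar>1 + 2 * real_of_int k\<bar> \<ge> 1"
  proof -
    have "\<bar>1 + 2 * k\<bar> \<ge> 1" by presburger
    then show ?thesis by (metis (mono_tags) of_int_1 of_int_abs of_int_add of_int_le_iff of_int_mult of_int_numeral)
  qed
  ultimately have "circ_dist x (x+pi) \<ge> pi" using k by (simp add: mult_le_cancel_left1)
  then show ?thesis using circ_dist_le_pi[of x "x+pi"] by linarith
qed

lemma circ_dist_antipode_sum: "circ_dist x y + circ_dist y (x + pi) \<le> pi"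
proof -
  obtain k where k: "circ_dist x y = \<bar>x - y - 2*pi* of_int k\<bar>" "circ_dist x y \<le> pi" using circ_dist_ex by blast
  define t where "t = x - y - 2*pi* of_int k"
  have a: "circ_dist y (x+pi) \<le> \<bar>y - (x + pi) - 2*pi* of_int (-k)\<bar>" by (rule circ_dist_le)
  have b: "circ_dist y (x+pi) \<le> \<bar>y - (x + pi) - 2*pi* of_int (-k-1)\<bar>" by (rule circ_dist_le)
  have a': "\<bar>y - (x + pi) - 2*pi* of_int (-k)\<bar> = \<bar>t + pi\<bar>" unfolding t_def by (simp add: algebra_simps)
  have b': "\<bar>y - (x + pi) - 2*pi* of_int (-k-1)\<bar> = \<bar>t - pi\<bar>" unfolding t_def by (simp add: algebra_simps)
  have "\<bar>t\<bar> \<le> pi" using k t_def by simp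
  show ?thesis
  proof (cases "t \<ge> 0")
    case True
    then have "\<bar>t - pi\<bar> = pi - t" "circ_dist x y = t" using \<open>\<bar>t\<bar> \<le> pi\<close> k(1) t_def by auto
    then show ?thesis using b b' by linarith
  next
    case False
    then have "\<bar>t + pi\<bar> = pi + t" "circ_dist x y = - t" using \<open>\<bar>t\<bar> \<le> pi\<close> k(1) t_def by auto
    then show ?thesis using a a' by linarith
  qed
qed

lemma circ_dist_shift: "circ_dist (x + 2*pi) y = circ_dist x y"
proof -
  obtain k where k: "circ_dist x y = \<bar>x - y - 2*pi * of_int k\<bar>" using circ_dist_ex by blast
  obtain l where l: "circ_dist (x+2*pi) y = \<bar>x + 2*pi - y - 2*pi * of_int l\<bar>" using circ_dist_ex by blast
  have 1: "circ_dist (x+2*pi) y \<le> \<bar>x + 2*pi - y - 2*pi * of_int (k+1)\<bar>" by (rule circ_dist_le)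
  have 2: "circ_dist x y \<le> \<bar>x - y - 2*pi * of_int (l - 1)\<bar>" by (rule circ_dist_le)
  have 3: "x + 2*pi - y - 2*pi * of_int (k+1) = x - y - 2*pi * of_int k" by (simp add: algebra_simps)
  have 4: "x - y - 2*pi * of_int (l - 1) = x + 2*pi - y - 2*pi * of_int l" by (simp add: algebra_simps)
  have "circ_dist (x+2*pi) y \<le> circ_dist x y" using 1 unfolding 3 k .
  moreover have "circ_dist x y \<le> circ_dist (x+2*pi) y" using 2 unfolding 4 l .
  ultimately show ?thesis by (rule order_antisym)
qed



definition goodf :: "(real \<Rightarrow> real) \<Rightarrow> bool" where
  "goodf f \<longleftrightarrow> circ_fun f \<and> (\<forall>x. f x + f (x+pi) = pi) \<and> (\<forall>x y. \<bar>f x - f y\<bar> \<le> circ_dist x y)"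

lemma good_tight: assumes "goodf f" shows "f \<in> tight_span_S1"
proof -
  have per: "circ_fun f" and ant: "\<And>x. f x + f (x+pi) = pi"
    and lip: "\<And>x y. \<bar>f x - f y\<bar> \<le> circ_dist x y" using assms unfolding goodf_def by auto
  have bd: "bounded (range f)"
    unfolding bounded_iff
  proof (intro exI[of _ "\<bar>f 0\<bar> + pi"] ballI)
    fix z assume "z \<in> range f"
    then obtain x where "z = f x" by auto
    then show "norm z \<le> \<bar>f 0\<bar> + pi" using lip[of x 0] circ_dist_le_pi[of x 0] by auto
  qed
  have ineq: "f x + f y \<ge> circ_dist x y" for x y
  proof -
    have "f (x+pi) - f y \<le> circ_dist (x+pi) y" using lip[of "x+pi" y] by auto
    moreover have "circ_dist x y + circ_dist y (x + pi) \<le> pi" by (rule circ_dist_antipode_sum)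
    ultimately show ?thesis using ant[of x] circ_dist_sym[of y "x+pi"] by linarith
  qed
  have D: "f \<in> Delta_S1" unfolding Delta_S1_def using per bd ineq by auto
  have "g = f" if g: "g \<in> Delta_S1" "\<forall>x. g x \<le> f x" for g
  proof
    fix x
    have "g x + g (x+pi) \<ge> circ_dist x (x+pi)" using g(1) unfolding Delta_S1_def by auto
    then have "g x + g (x+pi) \<ge> pi" using circ_dist_antipode by simp
    then show "g x = f x" using g(2) ant[of x] by (smt (verit))
  qed
  then show ?thesis unfolding tight_span_S1_def using D by auto
qed

lemma tight_good: assumes "f \<in> tight_span_S1" shows "goodf f"
proof -
  have D: "f \<in> Delta_S1" and minf: "\<And>g. g \<in> Delta_S1 \<Longrightarrow> \<forall>x. g x \<le> f x \<Longrightarrow> g = f"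
    using assms unfolding tight_span_S1_def by auto
  have per: "\<And>x. f (x + 2*pi) = f x" and bd: "bounded (range f)"
    and ineq: "\<And>x y. f x + f y \<ge> circ_dist x y"
    using D unfolding Delta_S1_def circ_fun_def by auto
  obtain B where B: "\<And>x. \<bar>f x\<bar> \<le> B" using bd unfolding bounded_iff by auto
  define fs where "fs x = (SUP y. circ_dist x y - f y)" for x
  have bdd: "bdd_above (range (\<lambda>y. circ_dist x y - f y))" for x
    unfolding bdd_above_def
  proof (intro exI[of _ "pi + B"] ballI)
    fix z assume "z \<in> range (\<lambda>y. circ_dist x y - f y)"
    then obtain y where "z = circ_dist x y - f y" by auto
    then show "z \<le> pi + B" using circ_dist_le_pi[of x y] B[of y] by linarith
  qed
  have fs_ge: "fs x \<ge> circ_dist x y - f y" for x y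
    unfolding fs_def by (rule cSUP_upper[OF _ bdd]) simp
  have fs_le: "fs x \<le> f x" for x
    unfolding fs_def
  proof (rule cSUP_least)
    fix y show "circ_dist x y - f y \<le> f x" using ineq[of x y] by simp
  qed simp
  define g where "g x = (f x + fs x) / 2" for x
  have "g \<in> Delta_S1"
    unfolding Delta_S1_def circ_fun_def
  proof (intro CollectI conjI allI)
    fix x
    have "fs (x + 2*pi) = fs x" unfolding fs_def by (simp add: circ_dist_shift)
    then show "g (x + 2*pi) = g x" unfolding g_def using per by simp
  next
    show "bounded (range g)"
      unfolding bounded_iff
    proof (intro exI[of _ "B"] ballI)
      fix z assume "z \<in> range g"
      then obtain x where "z = g x" by auto
      moreover have "fs x \<ge> - f x" using fs_ge[of x x] circ_dist_refl[of x] by simp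
      ultimately show "norm z \<le> B" using fs_le[of x] B[of x] unfolding g_def by auto
    qed
  next
    fix x y
    have "f x + fs y \<ge> circ_dist x y" using fs_ge[of y x] circ_dist_sym[of x y] by simp
    moreover have "fs x + f y \<ge> circ_dist x y" using fs_ge[of x y] by simp
    ultimately show "g x + g y \<ge> circ_dist x y" unfolding g_def by (simp add: field_simps)
  qed
  moreover have "\<forall>x. g x \<le> f x" unfolding g_def using fs_le by (simp add: field_simps)
  ultimately have "g = f" by (rule minf)
  then have fsf: "fs x = f x" for x using fun_cong[OF \<open>g = f\<close>, of x] unfolding g_def by simp
  have lip1: "f x \<le> f x' + circ_dist x x'" for x x'
  proof -
    have "fs x \<le> f x' + circ_dist x x'"
      unfolding fs_def
    proof (rule cSUP_least)
      fix y
      have "circ_dist x y \<le> circ_dist x x' + circ_dist x' y" by (rule circ_dist_triangle)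
      moreover have "circ_dist x' y - f y \<le> f x'" using ineq[of x' y] by simp
      ultimately show "circ_dist x y - f y \<le> f x' + circ_dist x x'" by simp
    qed simp
    then show ?thesis using fsf by simp
  qed
  have lip: "\<bar>f x - f y\<bar> \<le> circ_dist x y" for x y
    using lip1[of x y] lip1[of y x] circ_dist_sym[of x y] by linarith
  have ant: "f x + f (x + pi) = pi" for x
  proof -
    have "fs x \<le> pi - f (x + pi)"
      unfolding fs_def
    proof (rule cSUP_least)
      fix y
      have "circ_dist x y + circ_dist y (x + pi) \<le> pi" by (rule circ_dist_antipode_sum)
      moreover have "f (x+pi) \<le> f y + circ_dist y (x+pi)" using lip[of "x+pi" y] circ_dist_sym[of y "x+pi"] by linarith
      ultimately show "circ_dist x y - f y \<le> pi - f (x + pi)" by simp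
    qed simp
    moreover have "f x + f (x+pi) \<ge> pi" using ineq[of x "x+pi"] circ_dist_antipode[of x] by simp
    ultimately show ?thesis using fsf[of x] by simp
  qed
  show ?thesis unfolding goodf_def circ_fun_def using per lip ant by auto
qed

lemma good_conv: assumes "\<forall>i<n. 0 \<le> c i \<and> goodf (f i)" "(\<Sum>i<n. c i) = 1"
  shows "goodf (\<lambda>x. \<Sum>i<n. c i * f i x)"
  unfolding goodf_def circ_fun_def
proof (intro conjI allI)
  fix x
  show "(\<Sum>i<n. c i * f i (x + 2 * pi)) = (\<Sum>i<n. c i * f i x)"
    using assms(1) unfolding goodf_def circ_fun_def by (intro sum.cong) auto
next
  fix x
  have "(\<Sum>i<n. c i * f i x) + (\<Sum>i<n. c i * f i (x + pi)) = (\<Sum>i<n. c i * (f i x + f i (x+pi)))"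
    by (simp add: sum.distrib algebra_simps)
  also have "\<dots> = (\<Sum>i<n. c i * pi)"
    using assms(1) unfolding goodf_def by (intro sum.cong) auto
  also have "\<dots> = pi" using assms(2) by (simp add: sum_distrib_right[symmetric])
  finally show "(\<Sum>i<n. c i * f i x) + (\<Sum>i<n. c i * f i (x + pi)) = pi" .
next
  fix x y
  have "\<bar>(\<Sum>i<n. c i * f i x) - (\<Sum>i<n. c i * f i y)\<bar> = \<bar>\<Sum>i<n. c i * (f i x - f i y)\<bar>"
    by (simp add: sum_subtractf algebra_simps)
  also have "\<dots> \<le> (\<Sum>i<n. \<bar>c i * (f i x - f i y)\<bar>)" by (rule sum_abs)
  also have "\<dots> \<le> (\<Sum>i<n. c i * circ_dist x y)"
  proof (rule sum_mono)
    fix i assume "i \<in> {..<n}"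
    then have "0 \<le> c i" "\<bar>f i x - f i y\<bar> \<le> circ_dist x y" using assms(1) unfolding goodf_def by auto
    then show "\<bar>c i * (f i x - f i y)\<bar> \<le> c i * circ_dist x y" by (simp add: abs_mult mult_left_mono)
  qed
  also have "\<dots> = circ_dist x y" using assms(2) by (simp add: sum_distrib_right[symmetric])
  finally show "\<bar>(\<Sum>i<n. c i * f i x) - (\<Sum>i<n. c i * f i y)\<bar> \<le> circ_dist x y" .
qed

lemma small_zero: assumes "\<And>e. e > 0 \<Longrightarrow> \<bar>a\<bar> \<le> (b::real) + e" shows "\<bar>a\<bar> \<le> b"
proof (rule ccontr)
  assume "\<not> ?thesis"
  then have "\<bar>a\<bar> - b > 0" by simp
  from assms[OF half_gt_zero[OF this]] this show False by (simp add: field_simps)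
qed

lemma good_closure: assumes "\<And>e. e > 0 \<Longrightarrow> \<exists>f. goodf f \<and> (\<forall>x. \<bar>f x - g x\<bar> \<le> e)"
  shows "goodf g"
proof -
  have "\<bar>g (x + 2*pi) - g x\<bar> \<le> 0" for x
  proof (rule small_zero)
    fix e :: real assume "e > 0"
    then obtain f where f: "goodf f" "\<forall>x. \<bar>f x - g x\<bar> \<le> e/2" using assms[of "e/2"] by auto
    then have "f (x + 2*pi) = f x" unfolding goodf_def circ_fun_def by auto
    then show "\<bar>g (x + 2*pi) - g x\<bar> \<le> 0 + e" using f(2) spec[OF f(2), of x] spec[OF f(2), of "x+2*pi"] by linarith
  qed
  moreover have "\<bar>(g x + g (x + pi)) - pi\<bar> \<le> 0" for x
  proof (rule small_zero)
    fix e :: real assume "e > 0"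
    then obtain f where f: "goodf f" "\<forall>x. \<bar>f x - g x\<bar> \<le> e/2" using assms[of "e/2"] by auto
    then have "f x + f (x + pi) = pi" unfolding goodf_def by auto
    then show "\<bar>(g x + g (x + pi)) - pi\<bar> \<le> 0 + e" using spec[OF f(2), of x] spec[OF f(2), of "x+pi"] by linarith
  qed
  moreover have "\<bar>g x - g y\<bar> \<le> circ_dist x y" for x y
  proof (rule small_zero)
    fix e :: real assume "e > 0"
    then obtain f where f: "goodf f" "\<forall>x. \<bar>f x - g x\<bar> \<le> e/2" using assms[of "e/2"] by auto
    then have "\<bar>f x - f y\<bar> \<le> circ_dist x y" unfolding goodf_def by auto
    then show "\<bar>g x - g y\<bar> \<le> circ_dist x y + e" using spec[OF f(2), of x] spec[OF f(2), of y] by linarith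
  qed
  ultimately show ?thesis unfolding goodf_def circ_fun_def by auto
qed



lemma ant_shift: assumes ant: "\<And>x. f x + f (x + pi) = pi"
  shows "f (x + of_int n * pi) = (if even n then f x else pi - f x)"
proof -
  have pos: "f (x + real m * pi) = (if even m then f x else pi - f x)" for m :: nat and x
  proof (induction m)
    case 0 then show ?case by simp
  next
    case (Suc m)
    have "f (x + real (Suc m) * pi) = pi - f (x + real m * pi)"
      using ant[of "x + real m * pi"] by (simp add: algebra_simps)
    then show ?case using Suc by simp
  qed
  have neg: "f (x - real m * pi) = (if even m then f x else pi - f x)" for m :: nat and x
  proof (induction m)
    case 0 then show ?case by simp
  next
    case (Suc m)
    have "f (x - real (Suc m) * pi) = pi - f (x - real m * pi)"
      using ant[of "x - real (Suc m) * pi"] by (simp add: algebra_simps)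
    then show ?case using Suc by simp
  qed
  show ?thesis
  proof (cases "n \<ge> 0")
    case True
    then obtain m where "n = int m" by (metis nonneg_eq_int)
    then show ?thesis using pos[of x m] by simp
  next
    case False
    then obtain m where "n = - int m" by (metis nonneg_eq_int neg_0_le_iff_le nle_le minus_minus)
    then show ?thesis using neg[of x m] by simp
  qed
qed

lemma lipschitz_extend:
  assumes ant: "\<And>x. f x + f (x + pi) = pi"
    and lip: "\<And>x y. 0 \<le> x \<Longrightarrow> x \<le> pi \<Longrightarrow> 0 \<le> y \<Longrightarrow> y \<le> pi \<Longrightarrow> \<bar>f x - f y\<bar> \<le> \<bar>x - y\<bar>"
  shows "goodf f"
proof -
  have per: "f (x + 2*pi) = f x" for x using ant[of x] ant[of "x+pi"] by (simp add: algebra_simps)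
  have f0: "f 0 + f pi = pi" using ant[of 0] by simp
  have loc0: "\<bar>f x - f y\<bar> \<le> y - x" if xy: "x \<le> y" "y \<le> x + pi" for x y
  proof -
    define n where "n = \<lfloor>x / pi\<rfloor>"
    define x' where "x' = x - of_int n * pi"
    have "of_int n \<le> x / pi" "x / pi < of_int n + 1" unfolding n_def by linarith+
    then have "of_int n * pi \<le> x" "x < (of_int n + 1) * pi"
      by (simp_all add: pos_le_divide_eq pos_divide_less_eq)
    then have x'b: "0 \<le> x'" "x' < pi" unfolding x'_def by (simp_all add: algebra_simps)
    define y' where "y' = y - of_int n * pi"
    have y'b: "x' \<le> y'" "y' \<le> x' + pi" using xy unfolding x'_def y'_def by auto
    have fx: "f x = (if even n then f x' else pi - f x')"
      using ant_shift[of f, OF ant, of x' n] unfolding x'_def by simp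
    show ?thesis
    proof (cases "y' \<le> pi")
      case True
      have fy: "f y = (if even n then f y' else pi - f y')"
        using ant_shift[of f, OF ant, of y' n] unfolding y'_def by simp
      have "\<bar>f x' - f y'\<bar> \<le> \<bar>x' - y'\<bar>" using lip[of x' y'] x'b y'b True by simp
      moreover have "\<bar>x' - y'\<bar> = y - x" using y'b unfolding x'_def y'_def by simp
      ultimately show ?thesis using fx fy by (cases "even n") auto
    next
      case False
      define y'' where "y'' = y' - pi"
      have y''b: "0 < y''" "y'' \<le> x'" using False y'b unfolding y''_def by auto
      have "f y = (if even (n+1) then f y'' else pi - f y'')"
        using ant_shift[of f, OF ant, of y'' "n+1"] unfolding y''_def y'_def by (simp add: algebra_simps)
      then have fy: "f y = (if even n then pi - f y'' else f y'')" by simp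
      have c1: "\<bar>f x' - f pi\<bar> \<le> pi - x'" using lip[of x' pi] x'b by simp
      have c2: "\<bar>f y'' - f 0\<bar> \<le> y''" using lip[of y'' 0] y''b x'b by simp
      have c3: "\<bar>f x' - f 0\<bar> \<le> x'" using lip[of x' 0] x'b by simp
      have c4: "\<bar>f y'' - f pi\<bar> \<le> pi - y''" using lip[of y'' pi] y''b x'b by simp
      have "\<bar>f x' + f y'' - pi\<bar> \<le> pi - (x' - y'')" using c1 c2 c3 c4 f0 by linarith
      moreover have "pi - (x' - y'') = y - x" unfolding y''_def x'_def y'_def by simp
      ultimately show ?thesis using fx fy by (cases "even n") (auto simp: abs_minus_commute)
    qed
  qed
  have loc: "\<bar>f x - f y\<bar> \<le> \<bar>x - y\<bar>" if "\<bar>x - y\<bar> \<le> pi" for x y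
  proof (cases "x \<le> y")
    case True then show ?thesis using loc0[of x y] that by auto
  next
    case False then show ?thesis using loc0[of y x] that by (auto simp: abs_minus_commute)
  qed
  have "\<bar>f x - f y\<bar> \<le> circ_dist x y" for x y
  proof -
    obtain k where k: "circ_dist x y = \<bar>x - y - 2*pi * of_int k\<bar>" "circ_dist x y \<le> pi"
      using circ_dist_ex by blast
    have "f (y + of_int (2*k) * pi) = f y" using ant_shift[of f, OF ant, of y "2*k"] by simp
    moreover have "\<bar>f x - f (y + of_int (2*k) * pi)\<bar> \<le> \<bar>x - (y + of_int (2*k) * pi)\<bar>"
      using loc k by (simp add: algebra_simps)
    ultimately show ?thesis using k by (simp add: algebra_simps)
  qed
  then show ?thesis unfolding goodf_def circ_fun_def using per ant by auto
qed



lemma g_theta_per: "g_theta t (p + 2*pi) = g_theta t p"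
  using circ_red_shift[of "p - t" 1] unfolding g_theta_def by (simp add: algebra_simps)

lemma circ_red_pi: "circ_red (z + pi) < pi \<longleftrightarrow> \<not> circ_red z < pi"
proof -
  obtain n::int where n: "circ_red z = z - 2*pi*n" using circ_red_eq by blast
  define r where "r = circ_red z"
  have rb: "0 \<le> r" "r < 2*pi" unfolding r_def using circ_red_bounds by auto
  have z: "z + pi = (r + pi) + 2*pi * of_int n" using n unfolding r_def by simp
  show ?thesis
  proof (cases "r < pi")
    case True
    then have "circ_red (z + pi) = r + pi" unfolding z circ_red_shift using rb by (intro circ_red_id) auto
    then show ?thesis using True r_def rb by simp
  next
    case False
    have z': "z + pi = (r - pi) + 2*pi * of_int (n+1)" using z by (simp add: algebra_simps)
    have "circ_red (z + pi) = r - pi" unfolding z' circ_red_shift using rb False by (intro circ_red_id) auto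
    then show ?thesis using False r_def rb by simp
  qed
qed

lemma g_theta_anti: "g_theta t (p + pi) = - g_theta t p"
  using circ_red_pi[of "p - t"] unfolding g_theta_def by (simp add: algebra_simps)

lemma h_set_ant: "h_set A p + h_set A (p + pi) = pi"
  unfolding h_set_def set_lebesgue_integral_def g_theta_anti by simp

lemma g_theta_le: assumes "0 \<le> t" "t \<le> pi" "0 \<le> p" "p < pi"
  shows "g_theta t p = (if t \<le> p then 1/2 else -1/2)"
proof (cases "t \<le> p")
  case True
  then have "circ_red (p - t) = p - t" using assms by (intro circ_red_id) auto
  then show ?thesis using True assms unfolding g_theta_def by simp
next
  case False
  have "circ_red (p - t) = circ_red ((p - t + 2*pi) + 2*pi * of_int (-1))" by simp
  also have "\<dots> = p - t + 2*pi" unfolding circ_red_shift using False assms by (intro circ_red_id) auto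
  finally show ?thesis using False assms unfolding g_theta_def by simp
qed

lemma I: "B \<in> lmeasurable \<Longrightarrow> integrable lebesgue (indicator B :: real \<Rightarrow> real)"
    by (intro integrable_real_indicator) (auto simp: fmeasurable_def)

lemma int4: fixes A B C S :: "real set" assumes "B \<in> lmeasurable" "A \<in> lmeasurable" "C \<in> lmeasurable" "S \<in> lmeasurable"
  shows "integral\<^sup>L lebesgue (\<lambda>t. 2 * indicator B t - indicator A t - indicator C t + 1/2 * indicator S t :: real)
     = 2 * measure lebesgue B - measure lebesgue A - measure lebesgue C + 1/2 * measure lebesgue S"
proof -
  have iB: "integrable lebesgue (\<lambda>t. 2 * indicator B t :: real)" using I[OF assms(1)] by simp
  have iA: "integrable lebesgue (indicator A :: real \<Rightarrow> real)" using I[OF assms(2)] .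
  have iC: "integrable lebesgue (indicator C :: real \<Rightarrow> real)" using I[OF assms(3)] .
  have iS: "integrable lebesgue (\<lambda>t. 1/2 * indicator S t :: real)" using I[OF assms(4)] by simp
  have i1: "integrable lebesgue (\<lambda>t. 2 * indicator B t - indicator A t :: real)"
    using Bochner_Integration.integrable_diff[OF iB iA] .
  have i2: "integrable lebesgue (\<lambda>t. 2 * indicator B t - indicator A t - indicator C t :: real)"
    using Bochner_Integration.integrable_diff[OF i1 iC] .
  have "integral\<^sup>L lebesgue (\<lambda>t. 2 * indicator B t - indicator A t - indicator C t + 1/2 * indicator S t :: real)
     = integral\<^sup>L lebesgue (\<lambda>t. 2 * indicator B t - indicator A t - indicator C t) + integral\<^sup>L lebesgue (\<lambda>t. 1/2 * indicator S t :: real)"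
    using Bochner_Integration.integral_add[OF i2 iS] .
  also have "integral\<^sup>L lebesgue (\<lambda>t. 2 * indicator B t - indicator A t - indicator C t :: real)
     = integral\<^sup>L lebesgue (\<lambda>t. 2 * indicator B t - indicator A t) - integral\<^sup>L lebesgue (indicator C :: real \<Rightarrow> real)"
    using Bochner_Integration.integral_diff[OF i1 iC] .
  also have "integral\<^sup>L lebesgue (\<lambda>t. 2 * indicator B t - indicator A t :: real)
     = integral\<^sup>L lebesgue (\<lambda>t. 2 * indicator B t) - integral\<^sup>L lebesgue (indicator A :: real \<Rightarrow> real)"
    using Bochner_Integration.integral_diff[OF iB iA] .
  also have "integral\<^sup>L lebesgue (\<lambda>t. 2 * indicator B t :: real) = 2 * measure lebesgue B"
    by (simp only: integral_mult_right_zero integral_indicator) simp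
  also have "integral\<^sup>L lebesgue (\<lambda>t. 1/2 * indicator S t :: real) = 1/2 * measure lebesgue S"
    by (simp only: integral_mult_right_zero integral_indicator) simp
  finally show ?thesis by simp
qed

lemma h_set_formula0:
  assumes A: "A \<subseteq> {0..pi}" "A \<in> sets lebesgue" and p: "0 \<le> p" "p < pi"
  shows "h_set A p = pi - p + 2 * measure lebesgue (A \<inter> {0..p}) - measure lebesgue A"
proof -
  have S: "{0..pi} \<in> lmeasurable" by simp
  have lm: "A \<in> lmeasurable" by (rule fmeasurableI2[OF S A(1) A(2)])
  have s2: "A \<inter> {0..p} \<in> sets lebesgue" by (rule sets.Int[OF A(2)]) simp
  have lm2: "A \<inter> {0..p} \<in> lmeasurable" by (rule fmeasurableI2[OF lm Int_lower1 s2])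
  have eq: "(\<lambda>t. indicator {0..pi} t *\<^sub>R (g_theta t p * (indicator A t - indicator ({0..pi} - A) t)))
     = (\<lambda>t. 2 * indicator (A \<inter> {0..p}) t - indicator A t - indicator {0..p} t + 1/2 * indicator {0..pi} t :: real)"
  proof
    fix t
    show "indicator {0..pi} t *\<^sub>R (g_theta t p * (indicator A t - indicator ({0..pi} - A) t))
     = 2 * indicator (A \<inter> {0..p}) t - indicator A t - indicator {0..p} t + 1/2 * indicator {0..pi} t"
    proof (cases "t \<in> {0..pi}")
      case True
      show ?thesis
      proof (cases "t \<le> p")
        case le: True
        have g: "g_theta t p = 1/2" using g_theta_le[of t p] p True le by simp
        have "t \<in> {0..p}" using le True by simp
        then show ?thesis using True unfolding g by (cases "t \<in> A") (simp_all add: indicator_def)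
      next
        case gt: False
        have g: "g_theta t p = -1/2" using g_theta_le[of t p] p True gt by simp
        have "t \<notin> {0..p}" using gt by simp
        then show ?thesis using True unfolding g by (cases "t \<in> A") (simp_all add: indicator_def)
      qed
    next
      case False
      then have "t \<notin> A" "t \<notin> {0..p}" using A p by auto
      then have "indicator {0..pi} t = (0::real)" "indicator A t = (0::real)" "indicator {0..p} t = (0::real)"
        "indicator (A \<inter> {0..p}) t = (0::real)" using False by (simp_all add: indicator_def)
      then show ?thesis by simp
    qed
  qed
  have mC: "measure lebesgue {0..p} = p" using p by simp
  have mS: "measure lebesgue {0..pi} = pi" by simp
  have "integral\<^sup>L lebesgue (\<lambda>t. 2 * indicator (A \<inter> {0..p}) t - indicator A t - indicator {0..p} t + 1/2 * indicator {0..pi} t :: real)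
     = 2 * measure lebesgue (A \<inter> {0..p}) - measure lebesgue A - measure lebesgue {0..p} + 1/2 * measure lebesgue {0..pi}"
    by (rule int4[OF lm2 lm]) simp_all
  then have "(LINT t:{0..pi}|lebesgue. g_theta t p * (indicator A t - indicator ({0..pi} - A) t))
      = 2 * measure lebesgue (A \<inter> {0..p}) - measure lebesgue A - p + pi/2"
    unfolding set_lebesgue_integral_def eq mC mS by simp
  then show ?thesis unfolding h_set_def by simp
qed



lemma aA_lip:
  assumes A: "A \<in> sets lebesgue" and pq: "0 \<le> p" "p \<le> q"
  shows "measure lebesgue (A \<inter> {0..p}) \<le> measure lebesgue (A \<inter> {0..q})"
    "measure lebesgue (A \<inter> {0..q}) - measure lebesgue (A \<inter> {0..p}) \<le> q - p"
proof -
  have Sq: "{0..q} \<in> lmeasurable" by simp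
  have sq: "A \<inter> {0..q} \<in> sets lebesgue" by (rule sets.Int[OF A]) simp
  have sp: "A \<inter> {0..p} \<in> sets lebesgue" by (rule sets.Int[OF A]) simp
  have lq: "A \<inter> {0..q} \<in> lmeasurable" by (rule fmeasurableI2[OF Sq Int_lower2 sq])
  have sub: "A \<inter> {0..p} \<subseteq> A \<inter> {0..q}" using pq by auto
  show "measure lebesgue (A \<inter> {0..p}) \<le> measure lebesgue (A \<inter> {0..q})"
    by (rule measure_mono_fmeasurable[OF sub sp lq])
  have "measure lebesgue (A \<inter> {0..q} - A \<inter> {0..p}) = measure lebesgue (A \<inter> {0..q}) - measure lebesgue (A \<inter> {0..p})"
    by (rule measure_Diff) (use lq sq sp sub in \<open>auto simp: fmeasurable_def\<close>)
  moreover have "measure lebesgue (A \<inter> {0..q} - A \<inter> {0..p}) \<le> measure lebesgue {p..q}"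
  proof (rule measure_mono_fmeasurable)
    show "A \<inter> {0..q} - A \<inter> {0..p} \<subseteq> {p..q}" using pq by auto
    show "A \<inter> {0..q} - A \<inter> {0..p} \<in> sets lebesgue" using sq sp by auto
    show "{p..q} \<in> lmeasurable" by simp
  qed
  moreover have "measure lebesgue {p..q} = q - p" using pq by simp
  ultimately show "measure lebesgue (A \<inter> {0..q}) - measure lebesgue (A \<inter> {0..p}) \<le> q - p" by simp
qed

lemma h_set_formula:
  assumes A: "A \<subseteq> {0..pi}" "A \<in> sets lebesgue" and p: "0 \<le> p" "p \<le> pi"
  shows "h_set A p = pi - p + 2 * measure lebesgue (A \<inter> {0..p}) - measure lebesgue A"
proof (cases "p < pi")
  case True
  then show ?thesis using h_set_formula0[OF A] p by simp
next
  case False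
  then have pp: "p = pi" using p by simp
  have h0: "h_set A 0 = pi - 0 + 2 * measure lebesgue (A \<inter> {0..0}) - measure lebesgue A"
    using h_set_formula0[OF A, of 0] by simp
  have "measure lebesgue (A \<inter> {0..0}) \<le> measure lebesgue {0..0::real}"
  proof (rule measure_mono_fmeasurable)
    show "{0..0::real} \<in> lmeasurable" by (simp del: atLeastAtMost_singleton)
  qed (use A(2) in auto)
  then have "measure lebesgue (A \<inter> {0..0}) \<le> 0" by simp
  moreover have "measure lebesgue (A \<inter> {0..0}) \<ge> 0" by simp
  ultimately have z: "measure lebesgue (A \<inter> {0..0}) = 0" by linarith
  have "A \<inter> {0..pi} = A" using A by auto
  moreover have "h_set A pi = pi - h_set A 0" using h_set_ant[of A 0] by simp
  ultimately show ?thesis using h0 z pp by simp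
qed

lemma h_set_good:
  assumes A: "A \<subseteq> {0..pi}" "A \<in> sets lebesgue"
  shows "goodf (h_set A)"
proof (rule lipschitz_extend)
  show "h_set A x + h_set A (x + pi) = pi" for x by (rule h_set_ant)
  have le: "\<bar>h_set A x - h_set A y\<bar> \<le> \<bar>x - y\<bar>" if "0 \<le> x" "x \<le> y" "y \<le> pi" for x y
  proof -
    have "h_set A y - h_set A x = -(y - x) + 2 * (measure lebesgue (A \<inter> {0..y}) - measure lebesgue (A \<inter> {0..x}))"
      using h_set_formula[OF A, of x] h_set_formula[OF A, of y] that by simp
    moreover note aA_lip[OF A(2), of x y]
    ultimately show ?thesis using that by (simp add: abs_le_iff)
  qed
  show "\<bar>h_set A x - h_set A y\<bar> \<le> \<bar>x - y\<bar>" if "0 \<le> x" "x \<le> pi" "0 \<le> y" "y \<le> pi" for x y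
  proof (cases "x \<le> y")
    case True then show ?thesis using le[of x y] that by simp
  next
    case False then show ?thesis using le[of y x] that by (simp add: abs_minus_commute)
  qed
qed



lemma grid_find:
  assumes N: "N > 0" and p: "0 \<le> p" "p \<le> pi"
  shows "\<exists>j<N. real j * (pi / real N) \<le> p \<and> p \<le> real (Suc j) * (pi / real N)"
proof -
  define \<delta> where "\<delta> = pi / real N"
  have dpos: "\<delta> > 0" unfolding \<delta>_def using N by simp
  define j0 where "j0 = nat \<lfloor>p / \<delta>\<rfloor>"
  have fl: "real_of_int \<lfloor>p / \<delta>\<rfloor> \<le> p / \<delta>" "p / \<delta> < real_of_int \<lfloor>p / \<delta>\<rfloor> + 1" by linarith+
  have nn: "\<lfloor>p / \<delta>\<rfloor> \<ge> 0" using p dpos by simp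
  then have j0r: "real j0 = real_of_int \<lfloor>p / \<delta>\<rfloor>" unfolding j0_def by simp
  have "real j0 * \<delta> \<le> p / \<delta> * \<delta>" unfolding j0r by (rule mult_right_mono[OF fl(1)]) (use dpos in simp)
  then have "real j0 * \<delta> \<le> p" using dpos by simp
  moreover have "p / \<delta> * \<delta> < (real j0 + 1) * \<delta>" unfolding j0r by (rule mult_strict_right_mono[OF fl(2) dpos])
  then have "p < (real j0 + 1) * \<delta>" using dpos by simp
  moreover have "p / \<delta> \<le> real N" using p N unfolding \<delta>_def by (simp add: field_simps)
  then have "j0 \<le> N" using fl(1) j0r by linarith
  ultimately show ?thesis
  proof (cases "j0 < N")
    case True
    then show ?thesis using \<open>real j0 * \<delta> \<le> p\<close> \<open>p < (real j0 + 1) * \<delta>\<close> unfolding \<delta>_def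
      by (intro exI[of _ j0]) (auto simp: algebra_simps)
  next
    case False
    then have "j0 = N" using \<open>j0 \<le> N\<close> by simp
    then have "p = pi" using \<open>real j0 * \<delta> \<le> p\<close> p N unfolding \<delta>_def by simp
    moreover have "real (N - 1) * \<delta> \<le> pi" "pi \<le> real (Suc (N - 1)) * \<delta>"
      using N dpos unfolding \<delta>_def by (simp_all add: of_nat_diff field_simps)
    ultimately show ?thesis using N unfolding \<delta>_def by (intro exI[of _ "N - 1"]) auto
  qed
qed

lemma approx:
  assumes g: "goodf f" and e: "e > 0"
  shows "\<exists>A. A \<subseteq> {0..pi} \<and> A \<in> sets lebesgue \<and> (\<forall>x. \<bar>h_set A x - f x\<bar> \<le> e)"
proof -
  have ant: "\<And>x. f x + f (x + pi) = pi" and lipf: "\<And>x y. \<bar>f x - f y\<bar> \<le> circ_dist x y"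
    using g unfolding goodf_def by auto
  obtain N :: nat where N: "2 * pi / e < real N" using reals_Archimedean2 by blast
  have Npos: "N > 0" using N e by (metis of_nat_0 not_gr_zero divide_pos_pos pi_gt_zero zero_less_numeral mult_pos_pos not_less_iff_gr_or_eq)
  define \<delta> where "\<delta> = pi / real N"
  have dpos: "\<delta> > 0" unfolding \<delta>_def using Npos by simp
  have de: "2 * \<delta> \<le> e"
  proof -
    have "2 * pi < e * real N" using N e by (simp add: pos_divide_less_eq mult.commute)
    then show ?thesis unfolding \<delta>_def using Npos by (simp add: field_simps)
  qed
  define pt where "pt k = real k * \<delta>" for k :: nat
  have ptS: "pt (Suc k) = pt k + \<delta>" for k unfolding pt_def by (simp add: algebra_simps)
  have pt0: "pt 0 = 0" unfolding pt_def by simp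
  have ptN: "pt N = pi" unfolding pt_def \<delta>_def using Npos by simp
  have ptnn: "pt k \<ge> 0" for k unfolding pt_def using dpos by simp
  have ptmono: "k \<le> l \<Longrightarrow> pt k \<le> pt l" for k l unfolding pt_def using dpos by (simp add: mult_right_mono)
  have ptle: "k \<le> N \<Longrightarrow> pt k \<le> pi" for k using ptmono[of k N] ptN by simp
  define u where "u p = (f p + p - f 0) / 2" for p
  have u1: "0 \<le> u q - u p" "u q - u p \<le> q - p" if "0 \<le> p" "p \<le> q" for p q
  proof -
    have "\<bar>f q - f p\<bar> \<le> circ_dist q p" by (rule lipf)
    also have "\<dots> \<le> \<bar>q - p - 2*pi * of_int 0\<bar>" by (rule circ_dist_le)
    finally have "\<bar>f q - f p\<bar> \<le> q - p" using that by simp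
    then show "0 \<le> u q - u p" "u q - u p \<le> q - p" unfolding u_def by (simp_all add: field_simps abs_le_iff)
  qed
  define d where "d k = u (pt (Suc k)) - u (pt k)" for k
  have d: "0 \<le> d k" "d k \<le> \<delta>" for k using u1[of "pt k" "pt (Suc k)"] ptnn[of k] ptS[of k] dpos unfolding d_def by auto
  define I where "I k = {pt k <.. pt k + d k}" for k
  define A where "A = (\<Union>k<N. I k)"
  have Isub: "I k \<subseteq> {pt k <.. pt (Suc k)}" for k unfolding I_def using d[of k] ptS[of k] by auto
  have AS: "A \<subseteq> {0..pi}"
  proof
    fix t assume "t \<in> A"
    then obtain k where k: "k < N" "t \<in> I k" unfolding A_def by auto
    then show "t \<in> {0..pi}" using Isub[of k] ptnn[of k] ptle[of "Suc k"] by auto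
  qed
  have Im: "I k \<in> sets lebesgue" for k unfolding I_def by simp
  have Am: "A \<in> sets lebesgue" unfolding A_def using Im by auto
  define a where "a p = measure lebesgue (A \<inter> {0..p})" for p
  have agrid: "a (pt j) = u (pt j)" if "j \<le> N" for j
    using that
  proof (induction j)
    case 0
    have "A \<inter> {0..0} = {}"
    proof (rule equals0I)
      fix t assume "t \<in> A \<inter> {0..0}"
      then obtain k where "t \<in> I k" "t \<le> 0" unfolding A_def by auto
      then show False using ptnn[of k] unfolding I_def by auto
    qed
    then show ?case unfolding a_def pt0 u_def by simp
  next
    case (Suc j)
    then have jN: "j < N" by simp
    have eq: "A \<inter> {0..pt (Suc j)} = (A \<inter> {0..pt j}) \<union> I j"
    proof
      show "A \<inter> {0..pt (Suc j)} \<subseteq> (A \<inter> {0..pt j}) \<union> I j"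
      proof
        fix t assume t: "t \<in> A \<inter> {0..pt (Suc j)}"
        then obtain k where k: "k < N" "t \<in> I k" unfolding A_def by auto
        consider "k = j" | "k < j" | "k > j" by linarith
        then show "t \<in> (A \<inter> {0..pt j}) \<union> I j"
        proof cases
          case 1 then show ?thesis using k by simp
        next
          case 2
          then have "pt (Suc k) \<le> pt j" by (intro ptmono) simp
          then show ?thesis using k t Isub[of k] by auto
        next
          case 3
          then have "pt (Suc j) \<le> pt k" by (intro ptmono) simp
          then show ?thesis using k t Isub[of k] by auto
        qed
      qed
      show "(A \<inter> {0..pt j}) \<union> I j \<subseteq> A \<inter> {0..pt (Suc j)}"
        using Isub[of j] ptnn[of j] ptmono[of j "Suc j"] jN unfolding A_def by fastforce
    qed
    have disj: "(A \<inter> {0..pt j}) \<inter> I j = {}" using Isub[of j] by auto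
    have fin1: "A \<inter> {0..pt j} \<in> lmeasurable"
      by (rule fmeasurableI2[of "{0..pt j}"]) (use Am in auto)
    have fin2: "I j \<in> lmeasurable"
      by (rule fmeasurableI2[of "{0..pt (Suc j)}"]) (use Im Isub[of j] ptnn[of j] in auto)
    have "a (pt (Suc j)) = a (pt j) + measure lebesgue (I j)"
      unfolding a_def eq
      by (rule measure_Union) (use fin1 fin2 disj in \<open>auto simp: fmeasurable_def\<close>)
    moreover have "measure lebesgue (I j) = d j" unfolding I_def using d[of j] by simp
    ultimately show ?case using Suc.IH jN unfolding d_def by simp
  qed
  have mA: "measure lebesgue A = pi - f 0"
  proof -
    have "A \<inter> {0..pi} = A" using AS by auto
    then have "measure lebesgue A = a pi" unfolding a_def by simp
    also have "\<dots> = u pi" using agrid[of N] ptN by simp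
    also have "\<dots> = pi - f 0" unfolding u_def using ant[of 0] by simp
    finally show ?thesis .
  qed
  have main: "\<bar>h_set A p - f p\<bar> \<le> e" if p: "0 \<le> p" "p \<le> pi" for p
  proof -
    obtain j where j: "j < N" "pt j \<le> p" "p \<le> pt (Suc j)"
      using grid_find[OF Npos p] unfolding pt_def \<delta>_def by blast
    have a1: "a (pt j) \<le> a p" "a p \<le> a (pt (Suc j))"
      unfolding a_def using aA_lip(1)[OF Am, of "pt j" p] aA_lip(1)[OF Am, of p "pt (Suc j)"] j ptnn[of j] by auto
    have u2: "u (pt j) \<le> u p" "u p \<le> u (pt (Suc j))"
      using u1[of "pt j" p] u1[of p "pt (Suc j)"] j ptnn[of j] by auto
    have "\<bar>a p - u p\<bar> \<le> d j"
      using a1 u2 agrid[of j] agrid[of "Suc j"] j unfolding d_def by (simp add: abs_le_iff)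
    then have "\<bar>a p - u p\<bar> \<le> \<delta>" using d[of j] by simp
    moreover have "h_set A p - f p = 2 * (a p - u p)"
    proof -
      have "2 * u p = f p + p - f 0" unfolding u_def by simp
      moreover have "h_set A p = pi - p + 2 * a p - measure lebesgue A"
        using h_set_formula[OF AS Am p] unfolding a_def .
      moreover have "2 * (a p - u p) = 2 * a p - 2 * u p" by (simp add: algebra_simps)
      ultimately show ?thesis using mA by linarith
    qed
    ultimately show ?thesis using de by (simp add: abs_mult)
  qed
  have "\<bar>h_set A x - f x\<bar> \<le> e" for x
  proof -
    define n where "n = \<lfloor>x / pi\<rfloor>"
    define x' where "x' = x - of_int n * pi"
    have "of_int n \<le> x / pi" "x / pi < of_int n + 1" unfolding n_def by linarith+
    then have "of_int n * pi \<le> x" "x < (of_int n + 1) * pi"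
      by (simp_all add: pos_le_divide_eq pos_divide_less_eq)
    then have x'b: "0 \<le> x'" "x' \<le> pi" unfolding x'_def by (simp_all add: algebra_simps)
    have fx: "f x = (if even n then f x' else pi - f x')"
      using ant_shift[of f, OF ant, of x' n] unfolding x'_def by simp
    have hx: "h_set A x = (if even n then h_set A x' else pi - h_set A x')"
      using ant_shift[of "h_set A", OF h_set_ant, of x' n] unfolding x'_def by simp
    have "\<bar>h_set A x' - f x'\<bar> \<le> e" using main x'b by simp
    then show ?thesis using fx hx by (cases "even n") (auto simp: abs_minus_commute)
  qed
  then show ?thesis using AS Am by blast
qed



theorem theorem3p21:
  shows "sup_closure (conv_hull_fun {h_set A | A. A \<subseteq> {0..pi} \<and> A \<in> sets lebesgue})
         = tight_span_S1"
proof
  let ?H = "{h_set A | A. A \<subseteq> {0..pi} \<and> A \<in> sets lebesgue}"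
  have hull_good: "goodf f" if "f \<in> conv_hull_fun ?H" for f
  proof -
    from that have "\<exists>(n::nat) c F. f = (\<lambda>x. \<Sum>i<n. c i * F i x) \<and> (\<forall>i<n. 0 \<le> c i \<and> F i \<in> ?H) \<and> (\<Sum>i<n. c i) = 1"
      unfolding conv_hull_fun_def by (simp only: mem_Collect_eq)
    then obtain n :: nat and c F where f: "f = (\<lambda>x. \<Sum>i<n. c i * F i x)"
      and cF: "\<forall>i<n. 0 \<le> c i \<and> F i \<in> ?H" and s: "(\<Sum>i<n. c i) = 1"
      by (elim exE conjE)
    have "\<forall>i<n. 0 \<le> c i \<and> goodf (F i)"
    proof (intro allI impI conjI)
      fix i assume i: "i < n"
      then show "0 \<le> c i" using cF by simp
      from i cF have "F i \<in> ?H" by simp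
      then obtain A where "F i = h_set A" "A \<subseteq> {0..pi}" "A \<in> sets lebesgue" by (simp only: mem_Collect_eq) (elim exE conjE)
      then show "goodf (F i)" using h_set_good by simp
    qed
    then show ?thesis unfolding f by (rule good_conv[OF _ s])
  qed
  show "sup_closure (conv_hull_fun ?H) \<subseteq> tight_span_S1"
  proof
    fix g assume "g \<in> sup_closure (conv_hull_fun ?H)"
    then have gs: "\<forall>e>0. \<exists>f\<in>conv_hull_fun ?H. \<forall>x. \<bar>f x - g x\<bar> \<le> e"
      unfolding sup_closure_def by (simp only: mem_Collect_eq)
    have "\<exists>f. goodf f \<and> (\<forall>x. \<bar>f x - g x\<bar> \<le> e)" if "e > 0" for e
    proof -
      from gs that obtain f where "f \<in> conv_hull_fun ?H" "\<forall>x. \<bar>f x - g x\<bar> \<le> e" by auto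
      then show ?thesis using hull_good by auto
    qed
    then have "goodf g" by (rule good_closure)
    then show "g \<in> tight_span_S1" by (rule good_tight)
  qed
  show "tight_span_S1 \<subseteq> sup_closure (conv_hull_fun ?H)"
  proof
    fix g assume "g \<in> tight_span_S1"
    then have gg: "goodf g" by (rule tight_good)
    have "\<exists>f\<in>conv_hull_fun ?H. \<forall>x. \<bar>f x - g x\<bar> \<le> e" if e: "e > 0" for e
    proof -
      obtain A where A: "A \<subseteq> {0..pi}" "A \<in> sets lebesgue" "\<forall>x. \<bar>h_set A x - g x\<bar> \<le> e"
        using approx[OF gg e] by blast
      have hH: "h_set A \<in> ?H" using A(1,2) by blast
      have "(\<lambda>x. \<Sum>i<(1::nat). (\<lambda>_. 1::real) i * (\<lambda>_. h_set A) i x) \<in> conv_hull_fun ?H"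
        unfolding conv_hull_fun_def mem_Collect_eq
        by (intro exI[of _ "1::nat"] exI[of _ "\<lambda>_. 1::real"] exI[of _ "\<lambda>_. h_set A"] conjI refl) (use hH in simp_all)
      moreover have "(\<lambda>x. \<Sum>i<(1::nat). (\<lambda>_. 1::real) i * (\<lambda>_. h_set A) i x) = h_set A" by simp
      ultimately have "h_set A \<in> conv_hull_fun ?H" by simp
      then show ?thesis using A(3) by blast
    qed
    then show "g \<in> sup_closure (conv_hull_fun ?H)" unfolding sup_closure_def by blast
  qed
qed

end
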